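(* Let $k\ge1$, and let $\mathcal P=\{p_1,\dots,p_{k^2}\}$ be a family of real polynomials in the commuting variables $x_1,\dots,x_{2k^2}$ admitting an nc representation $p(X,Y)$ of degree $d>1$. Let $t\ge2$ and suppose $$p(X,Y)=d_1X^t+d_2X^{t-1}Y+d_3YX^{t-1}+q(X,Y),$$ where $q$ contains no scalar multiples of $X^t,X^{t-1}Y,YX^{t-1}$, and $d_1,d_2,d_3$ are pairwise distinct. If $x_u$ is a diagonal entry of $X$, then the family contains (counting over all polynomials) exactly: $2k-2$ terms $d_1x_u^{t-1}x_v$ with $x_v\ne x_u$ if $d_1\ne0$; $k-1$ terms $d_2x_u^{t-1}x_v$ with $x_v$ an off-diagonal entry of $Y$ if $d_2\ne0$; $k-1$ terms $d_3x_u^{t-1}x_v$ with $x_v$ an off-diagonal entry of $Y$ if $d_3\ne0$; and $1$ term $\varphi(t-1,1)x_u^{t-1}x_v$ with $x_v$ a diagonal entry of $Y$ if $\varphi(t-1,1)\ne0$. These account for all two letter terms of degree $t$ in which $x_u$ has degree $t-1$, and no two terms in this list are the same. Moreover, if $x_u$ is in position $(a,a)$ of $X$ and $p_{ab}$ denotes the polynomial in position $(a,b)$ of the array $p(X,Y)$, then for $b\ne a$, $$p_{ab}=d_1x_u^{t-1}x_v+d_2x_u^{t-1}x_w+\cdots,$$ where $x_v$ (resp. $x_w$) is the $(a,b)$ entry of $X$ (resp. $Y$) and $p_{ab}$ contains no other two letter monomials of degree $t$ having $x_u^{t-1}$ as a factor; and similarly $$p_{ba}=d_1x_u^{t-1}x_m+d_3x_u^{t-1}x_n+\cdots,$$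 where $x_m$ (resp. $x_n$) is the $(b,a)$ entry of $X$ (resp. $Y$) and $p_{ba}$ contains no other two letter monomials of degree $t$ having $x_u^{t-1}$ as a factor.
   Context: The family $\mathcal P$ admits an nc representation $p(X,Y)$ if there are $k\times k$ matrices $X,Y$ whose $2k^2$ entries are the variables $x_1,\dots,x_{2k^2}$, each used exactly once, and a noncommutative polynomial $p$ in two letters with real coefficients such that the matrix $p(X,Y)$ is a $k\times k$ array whose entries are $p_1,\dots,p_{k^2}$, each exactly once. A "term" means a monomial with its nonzero coefficient after collecting like terms. $\varphi(i,j)$ is the sum of coefficients of all monomials of $p$ of degree $i$ in $X$ and $j$ in $Y$. *)

theory Defs
  imports Complex_Main "HOL-Library.Multiset"
begin

text \<open>Noncommutative polynomials in two letters: words over bool (False = X, True = Y)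
  with real coefficients; the coefficient of a word is the value of the function.\<close>

type_synonym ncpoly = "bool list \<Rightarrow> real"
type_synonym cpoly = "nat multiset \<Rightarrow> real"

definition nc_support :: "ncpoly \<Rightarrow> bool list set" where
  "nc_support p = {w. p w \<noteq> 0}"

definition nc_has_degree :: "ncpoly \<Rightarrow> nat \<Rightarrow> bool" where
  "nc_has_degree p d \<longleftrightarrow> (\<exists>w\<in>nc_support p. length w = d) \<and> (\<forall>w\<in>nc_support p. length w \<le> d)"

definition wX :: "nat \<Rightarrow> bool list" where "wX n = replicate n False"

definition word_mono :: "(nat \<Rightarrow> nat \<Rightarrow> nat) \<Rightarrow> (nat \<Rightarrow> nat \<Rightarrow> nat) \<Rightarrow> bool list \<Rightarrow> nat list \<Rightarrow> nat multiset" where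
  "word_mono X Y w is = mset (map (\<lambda>j. (if w ! j then Y else X) (is ! j) (is ! Suc j)) [0..<length w])"

text \<open>Entry (a,b) of the k x k matrix p(X,Y), a commutative polynomial, collected:
  coefficient of monomial m.\<close>
definition ncentry :: "nat \<Rightarrow> ncpoly \<Rightarrow> (nat \<Rightarrow> nat \<Rightarrow> nat) \<Rightarrow> (nat \<Rightarrow> nat \<Rightarrow> nat) \<Rightarrow> nat \<Rightarrow> nat \<Rightarrow> cpoly" where
  "ncentry k p X Y a b m =
     (\<Sum>w\<in>nc_support p. p w * real (card {is. length is = Suc (length w) \<and> set is \<subseteq> {..<k}
        \<and> is ! 0 = a \<and> is ! length w = b \<and> word_mono X Y w is = m}))"

definition phi :: "ncpoly \<Rightarrow> nat \<Rightarrow> nat \<Rightarrow> real" where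
  "phi p i j = (\<Sum>w\<in>{w\<in>nc_support p. count_list w False = i \<and> count_list w True = j}. p w)"

definition nc_rep :: "nat \<Rightarrow> (nat \<Rightarrow> cpoly) \<Rightarrow> (nat \<Rightarrow> nat \<Rightarrow> nat) \<Rightarrow> (nat \<Rightarrow> nat \<Rightarrow> nat) \<Rightarrow> ncpoly \<Rightarrow> bool" where
  "nc_rep k P X Y p \<longleftrightarrow>
     finite (nc_support p) \<and>
     bij_betw (\<lambda>(c, i, j). if c then Y i j else X i j) (UNIV \<times> {..<k} \<times> {..<k}) {1..2 * k^2} \<and>
     (\<exists>\<sigma>. bij_betw \<sigma> ({..<k} \<times> {..<k}) {1..k^2} \<and>
          (\<forall>a<k. \<forall>b<k. ncentry k p X Y a b = P (\<sigma> (a, b))))"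

end

theory Submission
  imports Defs
begin

lemma count_mset_map_upt:
  "count (mset (map f [0..<t])) v = card {r. r < t \<and> f r = v}"
proof -
  have "count (mset (map f [0..<t])) v = length (filter ((=) v) (map f [0..<t]))"
    by (metis length_replicate replicate_count_mset_eq_filter_eq)
  also have "\<dots> = card {r. r < t \<and> f r = v}"
    unfolding length_filter_conv_card
    by (rule arg_cong[where f=card]) auto
  finally show ?thesis .
qed
lemma mset_map_all:
  "(\<forall>r<t. f r = u) \<Longrightarrow> mset (map f [0..<t]) = replicate_mset t u"
  by (induction t) auto
lemma mset_map_one:
  assumes "r0 < t" "\<forall>r<t. r \<noteq> r0 \<longrightarrow> f r = u" "f r0 = v"
  shows "mset (map f [0..<t]) = replicate_mset (t-1) u + {#v#}"
  using assms
proof (induction t)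
  case 0 then show ?case by simp
next
  case (Suc t)
  show ?case
  proof (cases "r0 = t")
    case True
    then have "mset (map f [0..<t]) = replicate_mset t u"
    proof (intro mset_map_all allI impI)
      fix r assume "r < t"
      then show "f r = u" using Suc.prems(2) True by simp
    qed
    moreover have "f t = v" using True Suc.prems(3) by simp
    ultimately show ?thesis by simp
  next
    case False
    then have r: "r0 < t" using Suc.prems by simp
    then have "mset (map f [0..<t]) = replicate_mset (t-1) u + {#v#}"
      using Suc.IH r Suc.prems(2,3) by simp
    moreover have "f t = u" using Suc.prems(2) False by simp
    ultimately show ?thesis using r
      by (cases t) (auto simp: add_mset_commute)
  qed
qed

lemma mset_char:
  assumes "v \<noteq> u"
  shows "mset (map f [0..<t]) = replicate_mset (t-1) u + {#v#} \<longleftrightarrow>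
    (\<exists>r0<t. (\<forall>r<t. r \<noteq> r0 \<longrightarrow> f r = u) \<and> f r0 = v)"
proof
  assume H: "mset (map f [0..<t]) = replicate_mset (t-1) u + {#v#}"
  have "count (mset (map f [0..<t])) v = 1" using H assms by simp
  then have "card {r. r < t \<and> f r = v} = 1" by (simp only: count_mset_map_upt)
  then obtain r0 where r0: "{r. r < t \<and> f r = v} = {r0}" by (auto simp: card_1_singleton_iff)
  have "\<forall>r<t. r \<noteq> r0 \<longrightarrow> f r = u"
  proof (intro allI impI)
    fix r assume "r < t" "r \<noteq> r0"
    then have "f r \<in># mset (map f [0..<t])" by simp
    then have "f r = u \<or> f r = v" unfolding H by (auto split: if_splits)
    moreover have "f r \<noteq> v" using r0 \<open>r < t\<close> \<open>r \<noteq> r0\<close> by blast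
    ultimately show "f r = u" by blast
  qed
  moreover have "r0 < t \<and> f r0 = v" using r0 by blast
  ultimately show "\<exists>r0<t. (\<forall>r<t. r \<noteq> r0 \<longrightarrow> f r = u) \<and> f r0 = v" by blast
next
  assume "\<exists>r0<t. (\<forall>r<t. r \<noteq> r0 \<longrightarrow> f r = u) \<and> f r0 = v"
  then obtain r0 where "r0 < t" "\<forall>r<t. r \<noteq> r0 \<longrightarrow> f r = u" "f r0 = v" by blast
  then show "mset (map f [0..<t]) = replicate_mset (t-1) u + {#v#}"
    by (rule mset_map_one)
qed

lemma nth_pth:
  "s \<le> Suc n \<Longrightarrow> (i # replicate n a @ [j]) ! s = (if s = 0 then i else if s = Suc n then j else a)"
  by (cases s) (auto simp: nth_append)


lemma injM:
  assumes inj: "inj_on (\<lambda>(c, i, j). if c then Y i j else X i j) (UNIV \<times> {..<k} \<times> {..<k})"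
    and "i < k" "j < k" "i' < k" "j' < k"
  shows "((if c then Y else X) i j = (if c' then Y else X) i' j') \<longleftrightarrow> (c = c' \<and> i = i' \<and> j = j')"
proof
  assume "(if c then Y else X) i j = (if c' then Y else X) i' j'"
  then have "(\<lambda>(c, i, j). if c then Y i j else X i j) (c, i, j) = (\<lambda>(c, i, j). if c then Y i j else X i j) (c', i', j')"
    by (cases c; cases c') auto
  from inj_onD[OF inj this] assms show "c = c' \<and> i = i' \<and> j = j'" by auto
qed auto

lemma wm_char:
  assumes inj: "inj_on (\<lambda>(c, i, j). if c then Y i j else X i j) (UNIV \<times> {..<k} \<times> {..<k})"
    and a: "a < k" and lw: "length w = t" and li: "length is = Suc t" and si: "set is \<subseteq> {..<k}"
    and v: "v \<noteq> X a a"
  shows "word_mono X Y w is = replicate_mset (t-1) (X a a) + {#v#} \<longleftrightarrow>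
    (\<exists>r0<t. (\<forall>r<t. r \<noteq> r0 \<longrightarrow> \<not> w ! r \<and> is ! r = a \<and> is ! Suc r = a)
       \<and> (if w ! r0 then Y else X) (is ! r0) (is ! Suc r0) = v)"
proof -
  have idx: "is ! r < k \<and> is ! Suc r < k" if "r < t" for r
  proof -
    have "is ! r \<in> set is" "is ! Suc r \<in> set is" using that li by (simp_all add: nth_mem)
    then show ?thesis using si by blast
  qed
  have wm: "word_mono X Y w is = mset (map (\<lambda>r. (if w ! r then Y else X) (is ! r) (is ! Suc r)) [0..<t])"
    by (simp add: word_mono_def lw)
  have eqv: "((if w ! r then Y else X) (is ! r) (is ! Suc r) = X a a) \<longleftrightarrow> (\<not> w ! r \<and> is ! r = a \<and> is ! Suc r = a)"
    if "r < t" for r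
    using injM[OF inj, of "is ! r" "is ! Suc r" a a "w ! r" False] idx[OF that] a by simp
  show ?thesis unfolding wm mset_char[OF v]
  proof
    assume "\<exists>r0<t. (\<forall>r<t. r \<noteq> r0 \<longrightarrow> (if w ! r then Y else X) (is ! r) (is ! Suc r) = X a a) \<and> (if w ! r0 then Y else X) (is ! r0) (is ! Suc r0) = v"
    then obtain r0 where "r0 < t" "\<forall>r<t. r \<noteq> r0 \<longrightarrow> (if w ! r then Y else X) (is ! r) (is ! Suc r) = X a a" "(if w ! r0 then Y else X) (is ! r0) (is ! Suc r0) = v"
      by blast
    then show "\<exists>r0<t. (\<forall>r<t. r \<noteq> r0 \<longrightarrow> \<not> w ! r \<and> is ! r = a \<and> is ! Suc r = a) \<and> (if w ! r0 then Y else X) (is ! r0) (is ! Suc r0) = v"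
      using eqv by blast
  next
    assume "\<exists>r0<t. (\<forall>r<t. r \<noteq> r0 \<longrightarrow> \<not> w ! r \<and> is ! r = a \<and> is ! Suc r = a) \<and> (if w ! r0 then Y else X) (is ! r0) (is ! Suc r0) = v"
    then obtain r0 where "r0 < t" "\<forall>r<t. r \<noteq> r0 \<longrightarrow> \<not> w ! r \<and> is ! r = a \<and> is ! Suc r = a" "(if w ! r0 then Y else X) (is ! r0) (is ! Suc r0) = v"
      by blast
    then show "\<exists>r0<t. (\<forall>r<t. r \<noteq> r0 \<longrightarrow> (if w ! r then Y else X) (is ! r) (is ! Suc r) = X a a) \<and> (if w ! r0 then Y else X) (is ! r0) (is ! Suc r0) = v"
      using eqv by blast
  qed
qed

lemma pth_unique:
  assumes t: "t \<ge> 1" and li: "length is = Suc t" and i0: "is ! 0 = i" and it: "is ! t = j"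
    and G: "\<forall>r<t. r \<noteq> r0 \<longrightarrow> is ! r = a \<and> is ! Suc r = a"
  shows "is = i # replicate (t-1) a @ [j]"
proof (rule nth_equalityI)
  show "length is = length (i # replicate (t-1) a @ [j])" using li t by simp
next
  fix s assume s: "s < length is"
  have st: "s \<le> Suc (t-1)" using s li t by simp
  have "is ! s = (if s = 0 then i else if s = Suc (t-1) then j else a)"
  proof (cases "s = 0 \<or> s = t")
    case True then show ?thesis using i0 it t by auto
  next
    case False
    then have s1: "0 < s" "s < t" using s li by auto
    show ?thesis
    proof (cases "s = r0")
      case True
      have "s - 1 < t" "s - 1 \<noteq> r0" using s1 True by auto
      then have "is ! Suc (s - 1) = a" using G by blast
      then have "is ! s = a" using s1 by simp
      then show ?thesis using s1 False by simp
    next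
      case False
      then show ?thesis using G s1 by auto
    qed
  qed
  then show "is ! s = (i # replicate (t-1) a @ [j]) ! s" by (simp only: nth_pth[OF st])
qed


lemma all_less_cong: "(\<And>r. r < t \<Longrightarrow> P r = Q r) \<Longrightarrow> (\<forall>r<t. P r) = (\<forall>r<t. Q r)"
  by auto

lemma ex_less_cong: "(\<And>r. r < t \<Longrightarrow> P r = Q r) \<Longrightarrow> (\<exists>r<t. P r) = (\<exists>r<t. Q r)"
  by auto

lemma ex_pth_cong:
  assumes A: "\<And>r. r < t \<Longrightarrow> A r = A' r" and B: "\<And>r. r < t \<Longrightarrow> B r = B' r"
  shows "(\<exists>r0<t. (\<forall>r<t. r \<noteq> r0 \<longrightarrow> \<not> w ! r \<and> A r = a \<and> B r = a) \<and> (if w ! r0 then Y else X) (A r0) (B r0) = v)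
     \<longleftrightarrow> (\<exists>r0<t. (\<forall>r<t. r \<noteq> r0 \<longrightarrow> \<not> w ! r \<and> A' r = a \<and> B' r = a) \<and> (if w ! r0 then Y else X) (A' r0) (B' r0) = v)"
  apply (rule ex_less_cong)
  apply (rule conj_cong)
   apply (rule all_less_cong)
   apply (simp only: A B)
  apply (simp only: A B)
  done

lemma wm_pth:
  assumes inj: "inj_on (\<lambda>(c, i, j). if c then Y i j else X i j) (UNIV \<times> {..<k} \<times> {..<k})"
    and a: "a < k" and i: "i < k" and j: "j < k" and lw: "length w = t" and t: "t \<ge> 1"
    and v: "v \<noteq> X a a"
  shows "word_mono X Y w (i # replicate (t-1) a @ [j]) = replicate_mset (t-1) (X a a) + {#v#} \<longleftrightarrow>
    (\<exists>r0<t. (\<forall>r<t. r \<noteq> r0 \<longrightarrow> \<not> w ! r \<and> (if r = 0 then i else a) = a \<and> (if Suc r = t then j else a) = a)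
       \<and> (if w ! r0 then Y else X) (if r0 = 0 then i else a) (if Suc r0 = t then j else a) = v)"
proof -
  let ?pth = "i # replicate (t-1) a @ [j]"
  have li: "length ?pth = Suc t" using t by simp
  have si: "set ?pth \<subseteq> {..<k}" using a i j by auto
  have n1: "?pth ! r = (if r = 0 then i else a)" if "r < t" for r
    using nth_pth[of r "t-1" i a j] that t by auto
  have n2: "?pth ! Suc r = (if Suc r = t then j else a)" if "r < t" for r
    using nth_pth[of "Suc r" "t-1" i a j] that t by auto
  show ?thesis
    unfolding wm_char[OF inj a lw li si v]
    by (rule ex_pth_cong) (use n1 n2 in auto)
qed

lemma card_S:
  assumes inj: "inj_on (\<lambda>(c, i, j). if c then Y i j else X i j) (UNIV \<times> {..<k} \<times> {..<k})"
    and a: "a < k" and i: "i < k" and j: "j < k" and t: "t \<ge> 1" and v: "v \<noteq> X a a"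
  shows "card {is. length is = Suc (length w) \<and> set is \<subseteq> {..<k} \<and> is ! 0 = i \<and> is ! length w = j
            \<and> word_mono X Y w is = replicate_mset (t-1) (X a a) + {#v#}}
       = (if length w = t \<and> word_mono X Y w (i # replicate (t-1) a @ [j]) = replicate_mset (t-1) (X a a) + {#v#} then 1 else 0)"
proof -
  let ?m = "replicate_mset (t-1) (X a a) + {#v#}"
  let ?pth = "i # replicate (t-1) a @ [j]"
  let ?S = "{is. length is = Suc (length w) \<and> set is \<subseteq> {..<k} \<and> is ! 0 = i \<and> is ! length w = j
            \<and> word_mono X Y w is = ?m}"
  have sz: "length w = t" if "word_mono X Y w is = ?m" for "is"
  proof -
    have "size (word_mono X Y w is) = length w" by (simp add: word_mono_def)
    moreover have "size ?m = t" using t by simp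
    ultimately show ?thesis using that by simp
  qed
  have li: "length ?pth = Suc t" using t by simp
  have si: "set ?pth \<subseteq> {..<k}" using a i j by auto
  have p0: "?pth ! 0 = i" by simp
  have pt: "?pth ! t = j" using nth_pth[of t "t-1" i a j] t by simp
  have "?S = (if length w = t \<and> word_mono X Y w ?pth = ?m then {?pth} else {})"
  proof (cases "length w = t \<and> word_mono X Y w ?pth = ?m")
    case True
    have "is = ?pth" if "is \<in> ?S" for "is"
    proof -
      from that have lw: "length w = t" and li': "length is = Suc t" and si': "set is \<subseteq> {..<k}"
        and i0: "is ! 0 = i" and it: "is ! t = j" and wm: "word_mono X Y w is = ?m"
        using sz by auto
      from wm[unfolded wm_char[OF inj a lw li' si' v]] obtain r0 where
        "\<forall>r<t. r \<noteq> r0 \<longrightarrow> \<not> w ! r \<and> is ! r = a \<and> is ! Suc r = a" by blast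
      then have "\<forall>r<t. r \<noteq> r0 \<longrightarrow> is ! r = a \<and> is ! Suc r = a" by blast
      from pth_unique[OF t li' i0 it this] show ?thesis .
    qed
    moreover have "?pth \<in> ?S" using True li si p0 pt by auto
    ultimately show ?thesis using True by auto
  next
    case False
    have "is \<notin> ?S" for "is"
    proof
      assume H: "is \<in> ?S"
      then have lw: "length w = t" and li': "length is = Suc t" and si': "set is \<subseteq> {..<k}"
        and i0: "is ! 0 = i" and it: "is ! t = j" and wm: "word_mono X Y w is = ?m"
        using sz by auto
      from wm[unfolded wm_char[OF inj a lw li' si' v]] obtain r0 where
        "\<forall>r<t. r \<noteq> r0 \<longrightarrow> \<not> w ! r \<and> is ! r = a \<and> is ! Suc r = a" by blast
      then have "\<forall>r<t. r \<noteq> r0 \<longrightarrow> is ! r = a \<and> is ! Suc r = a" by blast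
      from pth_unique[OF t li' i0 it this] have "is = ?pth" .
      then show False using False wm lw by simp
    qed
    then show ?thesis using False by auto
  qed
  then show ?thesis by simp
qed

lemma entry:
  assumes fin: "finite (nc_support p)"
    and inj: "inj_on (\<lambda>(c, i, j). if c then Y i j else X i j) (UNIV \<times> {..<k} \<times> {..<k})"
    and a: "a < k" and i: "i < k" and j: "j < k" and t: "t \<ge> 1" and v: "v \<noteq> X a a"
  shows "ncentry k p X Y i j (replicate_mset (t-1) (X a a) + {#v#}) =
    (\<Sum>w\<in>{w\<in>nc_support p. length w = t \<and> word_mono X Y w (i # replicate (t-1) a @ [j]) = replicate_mset (t-1) (X a a) + {#v#}}. p w)"
  unfolding ncentry_def sum.inter_filter[OF fin] card_S[OF inj a i j t v]
  by (rule sum.cong) auto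


lemma count_TF: "count_list w True + count_list w False = length w"
  by (induction w) auto

lemma count_True_1:
  "count_list w True = 1 \<longleftrightarrow> (\<exists>r0<length w. (\<forall>r<length w. r \<noteq> r0 \<longrightarrow> \<not> w ! r) \<and> w ! r0)"
proof -
  have c: "count_list w True = card {r. r < length w \<and> w ! r}"
    unfolding count_list_eq_length_filter length_filter_conv_card
    by (rule arg_cong[where f=card]) auto
  show ?thesis unfolding c
  proof
    assume "card {r. r < length w \<and> w ! r} = 1"
    then obtain r0 where r0: "{r. r < length w \<and> w ! r} = {r0}" by (auto simp: card_1_singleton_iff)
    then show "\<exists>r0<length w. (\<forall>r<length w. r \<noteq> r0 \<longrightarrow> \<not> w ! r) \<and> w ! r0" by blast
  next
    assume "\<exists>r0<length w. (\<forall>r<length w. r \<noteq> r0 \<longrightarrow> \<not> w ! r) \<and> w ! r0"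
    then obtain r0 where "r0 < length w" "\<forall>r<length w. r \<noteq> r0 \<longrightarrow> \<not> w ! r" "w ! r0" by blast
    then have "{r. r < length w \<and> w ! r} = {r0}" by blast
    then show "card {r. r < length w \<and> w ! r} = 1" by simp
  qed
qed

lemma sum_single:
  assumes "finite (nc_support p)"
  shows "(\<Sum>w\<in>{w\<in>nc_support p. w = w0}. p w) = p w0"
proof (cases "w0 \<in> nc_support p")
  case True
  then have "{w\<in>nc_support p. w = w0} = {w0}" by auto
  then show ?thesis by simp
next
  case False
  then have "{w\<in>nc_support p. w = w0} = {}" by auto
  moreover have "p w0 = 0" using False by (simp add: nc_support_def)
  ultimately show ?thesis by simp
qed

lemma Q_nn:
  assumes "i \<noteq> a" "j \<noteq> a" "t \<ge> 2"
  shows "\<not> (\<exists>r0<t. (\<forall>r<t. r \<noteq> r0 \<longrightarrow> \<not> w ! r \<and> (if r = 0 then i else a) = a \<and> (if Suc r = t then j else a) = a)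
       \<and> (if w ! r0 then Y else X) (if r0 = 0 then i else a) (if Suc r0 = t then j else a) = v)"
proof
  assume "\<exists>r0<t. (\<forall>r<t. r \<noteq> r0 \<longrightarrow> \<not> w ! r \<and> (if r = 0 then i else a) = a \<and> (if Suc r = t then j else a) = a)
       \<and> (if w ! r0 then Y else X) (if r0 = 0 then i else a) (if Suc r0 = t then j else a) = v"
  then obtain r0 where H: "\<forall>r<t. r \<noteq> r0 \<longrightarrow> (if r = 0 then i else a) = a \<and> (if Suc r = t then j else a) = a" by blast
  have "0 < t" "t - 1 < t" using assms by auto
  have "r0 = 0"
  proof (rule ccontr)
    assume "r0 \<noteq> 0"
    then have "(if (0::nat) = 0 then i else a) = a" using H \<open>0 < t\<close> by blast
    then show False using assms by simp
  qed
  moreover have "r0 = t - 1"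
  proof (rule ccontr)
    assume "r0 \<noteq> t - 1"
    then have "(if Suc (t - 1) = t then j else a) = a" using H \<open>t - 1 < t\<close> by blast
    then show False using assms by simp
  qed
  ultimately show False using assms by simp
qed

lemma wX_snoc:
  assumes "length w = t" "t \<ge> 1" "\<forall>r<t. r \<noteq> t - 1 \<longrightarrow> \<not> w ! r"
  shows "w = wX (t-1) @ [w ! (t-1)]"
proof (rule nth_equalityI)
  show "length w = length (wX (t-1) @ [w ! (t-1)])" using assms by (simp add: wX_def)
next
  fix r assume r: "r < length w"
  show "w ! r = (wX (t-1) @ [w ! (t-1)]) ! r"
  proof (cases "r < t - 1")
    case True then show ?thesis using assms r by (simp add: wX_def nth_append)
  next
    case False then have "r = t - 1" using r assms by simp
    then show ?thesis by (simp add: wX_def nth_append)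
  qed
qed

lemma wX_cons: "length w = t \<Longrightarrow> t \<ge> 1 \<Longrightarrow> (\<forall>r<t. r \<noteq> 0 \<longrightarrow> \<not> w ! r) \<Longrightarrow> w = w ! 0 # wX (t-1)"
  apply (rule nth_equalityI)
   apply (auto simp: wX_def nth_Cons split: nat.split)
  done

lemma Q_an:
  assumes "j \<noteq> a" "t \<ge> 1" "length w = t"
  shows "(\<exists>r0<t. (\<forall>r<t. r \<noteq> r0 \<longrightarrow> \<not> w ! r \<and> (if r = 0 then a else a) = a \<and> (if Suc r = t then j else a) = a)
       \<and> (if w ! r0 then Y else X) (if r0 = 0 then a else a) (if Suc r0 = t then j else a) = v)
     \<longleftrightarrow> (\<exists>L. w = wX (t-1) @ [L] \<and> (if L then Y else X) a j = v)"
proof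
  assume "\<exists>r0<t. (\<forall>r<t. r \<noteq> r0 \<longrightarrow> \<not> w ! r \<and> (if r = 0 then a else a) = a \<and> (if Suc r = t then j else a) = a)
       \<and> (if w ! r0 then Y else X) (if r0 = 0 then a else a) (if Suc r0 = t then j else a) = v"
  then obtain r0 where r0: "r0 < t" and H: "\<forall>r<t. r \<noteq> r0 \<longrightarrow> \<not> w ! r \<and> (if Suc r = t then j else a) = a"
    and V: "(if w ! r0 then Y else X) a (if Suc r0 = t then j else a) = v" by auto
  have "t - 1 < t" "Suc (t - 1) = t" using assms by auto
  have rr: "r0 = t - 1"
  proof (rule ccontr)
    assume "r0 \<noteq> t - 1"
    then have "(if Suc (t - 1) = t then j else a) = a" using H \<open>t - 1 < t\<close> by blast
    then show False using assms \<open>Suc (t - 1) = t\<close> by simp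
  qed
  then have "w = wX (t-1) @ [w ! (t-1)]" using H assms by (intro wX_snoc) auto
  moreover have "(if w ! (t-1) then Y else X) a j = v" using V rr r0 by auto
  ultimately show "\<exists>L. w = wX (t-1) @ [L] \<and> (if L then Y else X) a j = v" by blast
next
  assume "\<exists>L. w = wX (t-1) @ [L] \<and> (if L then Y else X) a j = v"
  then obtain L where w: "w = wX (t-1) @ [L]" and V: "(if L then Y else X) a j = v" by blast
  have "t - 1 < t" "Suc (t - 1) = t" using assms by auto
  moreover have "\<forall>r<t. r \<noteq> t - 1 \<longrightarrow> \<not> w ! r \<and> (if r = 0 then a else a) = a \<and> (if Suc r = t then j else a) = a"
    using assms by (auto simp: w wX_def nth_append)
  moreover have "w ! (t-1) = L" using w by (simp add: wX_def nth_append)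
  ultimately show "\<exists>r0<t. (\<forall>r<t. r \<noteq> r0 \<longrightarrow> \<not> w ! r \<and> (if r = 0 then a else a) = a \<and> (if Suc r = t then j else a) = a)
       \<and> (if w ! r0 then Y else X) (if r0 = 0 then a else a) (if Suc r0 = t then j else a) = v"
    using V by (intro exI[of _ "t-1"]) auto
qed

lemma Q_na:
  assumes "i \<noteq> a" "t \<ge> 2" "length w = t"
  shows "(\<exists>r0<t. (\<forall>r<t. r \<noteq> r0 \<longrightarrow> \<not> w ! r \<and> (if r = 0 then i else a) = a \<and> (if Suc r = t then a else a) = a)
       \<and> (if w ! r0 then Y else X) (if r0 = 0 then i else a) (if Suc r0 = t then a else a) = v)
     \<longleftrightarrow> (\<exists>L. w = L # wX (t-1) \<and> (if L then Y else X) i a = v)"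
proof
  assume "\<exists>r0<t. (\<forall>r<t. r \<noteq> r0 \<longrightarrow> \<not> w ! r \<and> (if r = 0 then i else a) = a \<and> (if Suc r = t then a else a) = a)
       \<and> (if w ! r0 then Y else X) (if r0 = 0 then i else a) (if Suc r0 = t then a else a) = v"
  then obtain r0 where r0: "r0 < t" and H: "\<forall>r<t. r \<noteq> r0 \<longrightarrow> \<not> w ! r \<and> (if r = 0 then i else a) = a"
    and V: "(if w ! r0 then Y else X) (if r0 = 0 then i else a) a = v" by auto
  have "0 < t" using assms by auto
  have rr: "r0 = 0"
  proof (rule ccontr)
    assume "r0 \<noteq> 0"
    then have "(if (0::nat) = 0 then i else a) = a" using H \<open>0 < t\<close> by blast
    then show False using assms by simp
  qed
  then have "w = w ! 0 # wX (t-1)" using H assms by (intro wX_cons) auto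
  moreover have "(if w ! 0 then Y else X) i a = v" using V rr by auto
  ultimately show "\<exists>L. w = L # wX (t-1) \<and> (if L then Y else X) i a = v" by blast
next
  assume "\<exists>L. w = L # wX (t-1) \<and> (if L then Y else X) i a = v"
  then obtain L where w: "w = L # wX (t-1)" and V: "(if L then Y else X) i a = v" by blast
  have "0 < t" using assms by auto
  moreover have "\<forall>r<t. r \<noteq> 0 \<longrightarrow> \<not> w ! r \<and> (if r = 0 then i else a) = a \<and> (if Suc r = t then a else a) = a"
    using assms by (auto simp: w wX_def nth_Cons split: nat.split)
  ultimately show "\<exists>r0<t. (\<forall>r<t. r \<noteq> r0 \<longrightarrow> \<not> w ! r \<and> (if r = 0 then i else a) = a \<and> (if Suc r = t then a else a) = a)
       \<and> (if w ! r0 then Y else X) (if r0 = 0 then i else a) (if Suc r0 = t then a else a) = v"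
    using V w by (intro exI[of _ 0]) auto
qed


lemma wX_Suc: "t \<ge> 1 \<Longrightarrow> wX (t-1) @ [False] = wX t"
  by (cases t) (simp_all add: wX_def replicate_append_same)

lemma wX_Suc': "t \<ge> 1 \<Longrightarrow> False # wX (t-1) = wX t"
  by (cases t) (simp_all add: wX_def)

lemma cval:
  assumes fin: "finite (nc_support p)"
    and inj: "inj_on (\<lambda>(c, i, j). if c then Y i j else X i j) (UNIV \<times> {..<k} \<times> {..<k})"
    and a: "a < k" and i: "i < k" and j: "j < k" and t: "t \<ge> 2" and v: "v \<noteq> X a a"
  shows "ncentry k p X Y i j (replicate_mset (t-1) (X a a) + {#v#}) =
   (if i = a \<and> j = a then (if v = Y a a then phi p (t-1) 1 else 0)
    else if i = a then (if v = X a j then p (wX t) else if v = Y a j then p (wX (t-1) @ [True]) else 0)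
    else if j = a then (if v = X i a then p (wX t) else if v = Y i a then p (True # wX (t-1)) else 0)
    else 0)"
proof -
  have t1: "t \<ge> 1" using t by simp
  define Q where "Q w \<longleftrightarrow> (\<exists>r0<t. (\<forall>r<t. r \<noteq> r0 \<longrightarrow> \<not> w ! r \<and> (if r = 0 then i else a) = a \<and> (if Suc r = t then j else a) = a)
       \<and> (if w ! r0 then Y else X) (if r0 = 0 then i else a) (if Suc r0 = t then j else a) = v)" for w
  have E: "ncentry k p X Y i j (replicate_mset (t-1) (X a a) + {#v#}) = (\<Sum>w\<in>{w\<in>nc_support p. length w = t \<and> Q w}. p w)"
    unfolding entry[OF fin inj a i j t1 v]
  proof (rule sum.cong[OF Collect_cong refl])
    fix w
    show "(w \<in> nc_support p \<and> length w = t \<and> word_mono X Y w (i # replicate (t - 1) a @ [j]) = replicate_mset (t - 1) (X a a) + {#v#})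
        = (w \<in> nc_support p \<and> length w = t \<and> Q w)"
      using wm_pth[OF inj a i j _ t1 v, where w = w] unfolding Q_def by blast
  qed
  have ne: "\<And>i j i' j'. i < k \<Longrightarrow> j < k \<Longrightarrow> i' < k \<Longrightarrow> j' < k \<Longrightarrow> X i j \<noteq> Y i' j'"
    using injM[OF inj, of _ _ _ _ False True] by simp
  show ?thesis
  proof (cases "i = a")
    case ia: True
    show ?thesis
    proof (cases "j = a")
      case ja: True
      show ?thesis
      proof (cases "v = Y a a")
        case vY: True
        have "{w\<in>nc_support p. length w = t \<and> Q w} = {w\<in>nc_support p. count_list w False = t - 1 \<and> count_list w True = 1}"
        proof (rule Collect_cong)
          fix w
          have Qw: "Q w \<longleftrightarrow> (\<exists>r0<t. (\<forall>r<t. r \<noteq> r0 \<longrightarrow> \<not> w ! r) \<and> w ! r0)"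
          proof -
            have "(if w ! r0 then Y else X) a a = Y a a \<longleftrightarrow> w ! r0" for r0
              using injM[OF inj a a a a, of "w ! r0" True] by simp
            moreover have "Q w \<longleftrightarrow> (\<exists>r0<t. (\<forall>r<t. r \<noteq> r0 \<longrightarrow> \<not> w ! r \<and> a = a \<and> a = a) \<and> (if w ! r0 then Y else X) a a = v)"
              unfolding Q_def by (simp only: ia ja if_cancel)
            ultimately show ?thesis using vY by simp
          qed
          have c: "count_list w True + count_list w False = length w" by (rule count_TF)
          show "(w \<in> nc_support p \<and> length w = t \<and> Q w) = (w \<in> nc_support p \<and> count_list w False = t - 1 \<and> count_list w True = 1)"
          proof (cases "length w = t")
            case True
            then show ?thesis using Qw count_True_1[of w] c by auto
          next
            case False
            then show ?thesis using c t1 by auto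
          qed
        qed
        then show ?thesis using E ia ja vY by (simp add: phi_def)
      next
        case vn: False
        have "{w\<in>nc_support p. length w = t \<and> Q w} = {}"
        proof -
          have "\<not> Q w" for w
          proof -
            have "(if w ! r0 then Y else X) a a \<noteq> v" for r0 using vn v by simp
            moreover have "Q w \<longleftrightarrow> (\<exists>r0<t. (\<forall>r<t. r \<noteq> r0 \<longrightarrow> \<not> w ! r \<and> a = a \<and> a = a) \<and> (if w ! r0 then Y else X) a a = v)"
              unfolding Q_def by (simp only: ia ja if_cancel)
            ultimately show ?thesis by blast
          qed
          then show ?thesis by blast
        qed
        then show ?thesis unfolding E using ia ja vn by (simp only: sum.empty if_True if_False simp_thms)
      qed
    next
      case jn: False
      have S: "{w\<in>nc_support p. length w = t \<and> Q w} = {w\<in>nc_support p. \<exists>L. w = wX (t-1) @ [L] \<and> (if L then Y else X) a j = v}"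
      proof (rule Collect_cong)
        fix w
        show "(w \<in> nc_support p \<and> length w = t \<and> Q w) = (w \<in> nc_support p \<and> (\<exists>L. w = wX (t-1) @ [L] \<and> (if L then Y else X) a j = v))"
        proof (cases "length w = t")
          case True
          have "Q w \<longleftrightarrow> (\<exists>L. w = wX (t-1) @ [L] \<and> (if L then Y else X) a j = v)"
            using Q_an[OF jn t1 True, where v = v and X = X and Y = Y] unfolding Q_def by (simp only: ia)
          then show ?thesis using True by auto
        next
          case False
          then show ?thesis using t1 by (auto simp: wX_def)
        qed
      qed
      have XY: "X a j \<noteq> Y a j" using ne a j by blast
      show ?thesis
      proof (cases "v = X a j")
        case True
        then have "{w\<in>nc_support p. \<exists>L. w = wX (t-1) @ [L] \<and> (if L then Y else X) a j = v} = {w\<in>nc_support p. w = wX t}"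
          using XY wX_Suc[OF t1] by auto
        then show ?thesis using E S sum_single[OF fin] True ia jn by simp
      next
        case vX: False
        show ?thesis
        proof (cases "v = Y a j")
          case True
          then have "{w\<in>nc_support p. \<exists>L. w = wX (t-1) @ [L] \<and> (if L then Y else X) a j = v} = {w\<in>nc_support p. w = wX (t-1) @ [True]}"
            using XY by auto
          then show ?thesis using E S sum_single[OF fin] True vX ia jn by simp
        next
          case False
          then have "{w\<in>nc_support p. \<exists>L. w = wX (t-1) @ [L] \<and> (if L then Y else X) a j = v} = {}"
            using vX by auto
          then show ?thesis using E S False vX ia jn by simp
        qed
      qed
    qed
  next
    case in_: False
    show ?thesis
    proof (cases "j = a")
      case ja: True
      have S: "{w\<in>nc_support p. length w = t \<and> Q w} = {w\<in>nc_support p. \<exists>L. w = L # wX (t-1) \<and> (if L then Y else X) i a = v}"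
      proof (rule Collect_cong)
        fix w
        show "(w \<in> nc_support p \<and> length w = t \<and> Q w) = (w \<in> nc_support p \<and> (\<exists>L. w = L # wX (t-1) \<and> (if L then Y else X) i a = v))"
        proof (cases "length w = t")
          case True
          have "Q w \<longleftrightarrow> (\<exists>L. w = L # wX (t-1) \<and> (if L then Y else X) i a = v)"
            using Q_na[OF in_ t True, where v = v and X = X and Y = Y] unfolding Q_def by (simp only: ja)
          then show ?thesis using True by auto
        next
          case False
          then show ?thesis using t1 by (auto simp: wX_def)
        qed
      qed
      have XY: "X i a \<noteq> Y i a" using ne a i by blast
      show ?thesis
      proof (cases "v = X i a")
        case True
        then have "{w\<in>nc_support p. \<exists>L. w = L # wX (t-1) \<and> (if L then Y else X) i a = v} = {w\<in>nc_support p. w = wX t}"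
          using XY wX_Suc'[OF t1] by auto
        then show ?thesis using E S sum_single[OF fin] True in_ ja by simp
      next
        case vX: False
        show ?thesis
        proof (cases "v = Y i a")
          case True
          then have "{w\<in>nc_support p. \<exists>L. w = L # wX (t-1) \<and> (if L then Y else X) i a = v} = {w\<in>nc_support p. w = True # wX (t-1)}"
            using XY by auto
          then show ?thesis using E S sum_single[OF fin] True vX in_ ja by simp
        next
          case False
          then have "{w\<in>nc_support p. \<exists>L. w = L # wX (t-1) \<and> (if L then Y else X) i a = v} = {}"
            using vX by auto
          then show ?thesis using E S False vX in_ ja by simp
        qed
      qed
    next
      case jn: False
      have "\<not> Q w" for w unfolding Q_def by (rule Q_nn[OF in_ jn t])
      then have "{w\<in>nc_support p. length w = t \<and> Q w} = {}" by blast
      then show ?thesis unfolding E using in_ jn by (simp only: sum.empty if_True if_False simp_thms)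
    qed
  qed
qed


lemma final:
  fixes cfun :: "nat \<Rightarrow> nat \<Rightarrow> nat \<Rightarrow> real"
  assumes inj: "inj_on (\<lambda>(c, i, j). if c then Y i j else X i j) (UNIV \<times> {..<k} \<times> {..<k})"
    and a: "a < k" and u: "u = X a a"
    and d12: "d1 \<noteq> d2" and d13: "d1 \<noteq> d3" and d23: "d2 \<noteq> d3"
    and cv: "\<And>i j v. i < k \<Longrightarrow> j < k \<Longrightarrow> v \<noteq> u \<Longrightarrow> cfun i j v =
      (if i = a \<and> j = a then (if v = Y a a then ph else 0)
       else if i = a then (if v = X a j then d1 else if v = Y a j then d2 else 0)
       else if j = a then (if v = X i a then d1 else if v = Y i a then d3 else 0)
       else 0)"
  shows
   "let c = cfun;
        T = {(i, j, v). i < k \<and> j < k \<and> v \<noteq> u \<and> c i j v \<noteq> 0};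
        XV = {X i j | i j. i < k \<and> j < k};
        YO = {Y i j | i j. i < k \<and> j < k \<and> i \<noteq> j};
        YD = {Y i i | i. i < k};
        T1 = {(i, j, v) \<in> T. v \<in> XV \<and> c i j v = d1};
        T2 = {(i, j, v) \<in> T. v \<in> YO \<and> c i j v = d2};
        T3 = {(i, j, v) \<in> T. v \<in> YO \<and> c i j v = d3};
        T4 = {(i, j, v) \<in> T. v \<in> YD \<and> c i j v = ph}
    in card T1 = (if d1 \<noteq> 0 then 2 * k - 2 else 0)
     \<and> card T2 = (if d2 \<noteq> 0 then k - 1 else 0)
     \<and> card T3 = (if d3 \<noteq> 0 then k - 1 else 0)
     \<and> card T4 = (if ph \<noteq> 0 then 1 else 0)
     \<and> T = T1 \<union> T2 \<union> T3 \<union> T4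
     \<and> T1 \<inter> T2 = {} \<and> T1 \<inter> T3 = {} \<and> T1 \<inter> T4 = {}
     \<and> T2 \<inter> T3 = {} \<and> T2 \<inter> T4 = {} \<and> T3 \<inter> T4 = {}
     \<and> (\<forall>b<k. b \<noteq> a \<longrightarrow>
          c a b (X a b) = d1 \<and> c a b (Y a b) = d2
          \<and> (\<forall>v. v \<noteq> u \<and> v \<noteq> X a b \<and> v \<noteq> Y a b \<longrightarrow> c a b v = 0)
          \<and> c b a (X b a) = d1 \<and> c b a (Y b a) = d3
          \<and> (\<forall>v. v \<noteq> u \<and> v \<noteq> X b a \<and> v \<noteq> Y b a \<longrightarrow> c b a v = 0))"
proof -
  have Xi: "\<And>i j i' j'. i < k \<Longrightarrow> j < k \<Longrightarrow> i' < k \<Longrightarrow> j' < k \<Longrightarrow> X i j = X i' j' \<longleftrightarrow> i = i' \<and> j = j'"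
    using injM[OF inj, of _ _ _ _ False False] by simp
  have Yi: "\<And>i j i' j'. i < k \<Longrightarrow> j < k \<Longrightarrow> i' < k \<Longrightarrow> j' < k \<Longrightarrow> Y i j = Y i' j' \<longleftrightarrow> i = i' \<and> j = j'"
    using injM[OF inj, of _ _ _ _ True True] by simp
  have XY: "\<And>i j i' j'. i < k \<Longrightarrow> j < k \<Longrightarrow> i' < k \<Longrightarrow> j' < k \<Longrightarrow> X i j \<noteq> Y i' j'"
    using injM[OF inj, of _ _ _ _ False True] by simp
  define T where "T = {(i, j, v). i < k \<and> j < k \<and> v \<noteq> u \<and> cfun i j v \<noteq> 0}"
  define XV where "XV = {X i j | i j. i < k \<and> j < k}"
  define YO where "YO = {Y i j | i j. i < k \<and> j < k \<and> i \<noteq> j}"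
  define YD where "YD = {Y i i | i. i < k}"
  define T1 where "T1 = {(i, j, v) \<in> T. v \<in> XV \<and> cfun i j v = d1}"
  define T2 where "T2 = {(i, j, v) \<in> T. v \<in> YO \<and> cfun i j v = d2}"
  define T3 where "T3 = {(i, j, v) \<in> T. v \<in> YO \<and> cfun i j v = d3}"
  define T4 where "T4 = {(i, j, v) \<in> T. v \<in> YD \<and> cfun i j v = ph}"
  define K where "K = {..<k} - {a}"
  define A1 where "A1 = (\<lambda>b. (a, b, X a b)) ` K"
  define A2 where "A2 = (\<lambda>b. (b, a, X b a)) ` K"
  define B2 where "B2 = (\<lambda>b. (a, b, Y a b)) ` K"
  define B3 where "B3 = (\<lambda>b. (b, a, Y b a)) ` K"
  have cK: "card K = k - 1" unfolding K_def using a by simp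
  have fK: "finite K" unfolding K_def by simp
  have cA1: "card A1 = k - 1" unfolding A1_def using cK by (subst card_image) (auto intro: inj_onI)
  have cA2: "card A2 = k - 1" unfolding A2_def using cK by (subst card_image) (auto intro: inj_onI)
  have cB2: "card B2 = k - 1" unfolding B2_def using cK by (subst card_image) (auto intro: inj_onI)
  have cB3: "card B3 = k - 1" unfolding B3_def using cK by (subst card_image) (auto intro: inj_onI)
  have dA: "A1 \<inter> A2 = {}" unfolding A1_def A2_def K_def by auto
  have cA: "card (A1 \<union> A2) = 2 * k - 2"
    using card_Un_disjoint[of A1 A2] dA cA1 cA2 fK unfolding A1_def A2_def by auto
  define cvf where "cvf i j v = (if i = a \<and> j = a then (if v = Y a a then ph else 0)
       else if i = a then (if v = X a j then d1 else if v = Y a j then d2 else 0)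
       else if j = a then (if v = X i a then d1 else if v = Y i a then d3 else 0)
       else 0)" for i j v
  have cv': "cfun i j v = cvf i j v" if "i < k" "j < k" "v \<noteq> u" for i j v
    unfolding cvf_def using cv[OF that] .
  have cf_aa: "cvf a a v = (if v = Y a a then ph else 0)" for v unfolding cvf_def by simp
  have cf_ab: "cvf a j v = (if v = X a j then d1 else if v = Y a j then d2 else 0)" if "j \<noteq> a" for j v
    unfolding cvf_def using that by simp
  have cf_ba: "cvf i a v = (if v = X i a then d1 else if v = Y i a then d3 else 0)" if "i \<noteq> a" for i v
    unfolding cvf_def using that by simp
  have cf_nn: "cvf i j v = 0" if "i \<noteq> a" "j \<noteq> a" for i j v
    unfolding cvf_def using that by simp
  have Kk: "b \<in> K \<longleftrightarrow> b < k \<and> b \<noteq> a" for b unfolding K_def by auto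
  have nuX: "X i j \<noteq> u" if "i < k" "j < k" "i \<noteq> a \<or> j \<noteq> a" for i j
    using Xi[OF that(1,2) a a] that u by auto
  have nuY: "Y i j \<noteq> u" if "i < k" "j < k" for i j
    using XY[OF a a that] u by metis
  have XYa: "X i j \<noteq> Y i j" if "i < k" "j < k" for i j using XY[OF that that] .
  have TC: "x \<in> T \<longleftrightarrow> x \<in> (if d1 \<noteq> 0 then A1 \<union> A2 else {}) \<union> (if d2 \<noteq> 0 then B2 else {})
      \<union> (if d3 \<noteq> 0 then B3 else {}) \<union> (if ph \<noteq> 0 then {(a, a, Y a a)} else {})" for x
  proof -
    obtain i j v where x: "x = (i, j, v)" by (cases x)
    show ?thesis
    proof
      assume "x \<in> T"
      then have ik: "i < k" and jk: "j < k" and vu: "v \<noteq> u" and nz: "cvf i j v \<noteq> 0"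
        unfolding x T_def using cv' by auto
      show "x \<in> (if d1 \<noteq> 0 then A1 \<union> A2 else {}) \<union> (if d2 \<noteq> 0 then B2 else {})
        \<union> (if d3 \<noteq> 0 then B3 else {}) \<union> (if ph \<noteq> 0 then {(a, a, Y a a)} else {})"
      proof (cases "i = a")
        case ia: True
        show ?thesis
        proof (cases "j = a")
          case True
          then show ?thesis using nz ia x cf_aa by (auto split: if_splits)
        next
          case False
          then have jK: "j \<in> K" using Kk jk by simp
          show ?thesis using nz ia x cf_ab[OF False] jK unfolding A1_def B2_def by (auto split: if_splits)
        qed
      next
        case in_: False
        show ?thesis
        proof (cases "j = a")
          case True
          then have iK: "i \<in> K" using Kk ik in_ by simp
          show ?thesis using nz True x cf_ba[OF in_] iK unfolding A2_def B3_def by (auto split: if_splits)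
        next
          case False
          then show ?thesis using nz cf_nn[OF in_ False] by simp
        qed
      qed
    next
      assume H: "x \<in> (if d1 \<noteq> 0 then A1 \<union> A2 else {}) \<union> (if d2 \<noteq> 0 then B2 else {})
        \<union> (if d3 \<noteq> 0 then B3 else {}) \<union> (if ph \<noteq> 0 then {(a, a, Y a a)} else {})"
      have mem: "(i', j', v') \<in> T" if "i' < k" "j' < k" "v' \<noteq> u" "cvf i' j' v' \<noteq> 0" for i' j' v'
        unfolding T_def using that cv' by auto
      show "x \<in> T"
      proof -
        consider (A1) "d1 \<noteq> 0" "x \<in> A1" | (A2) "d1 \<noteq> 0" "x \<in> A2" | (B2) "d2 \<noteq> 0" "x \<in> B2"
          | (B3) "d3 \<noteq> 0" "x \<in> B3" | (C) "ph \<noteq> 0" "x = (a, a, Y a a)"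
          using H by (auto split: if_splits)
        then show ?thesis
        proof cases
          case A1
          then obtain b where b: "b \<in> K" "x = (a, b, X a b)" unfolding A1_def by auto
          then have "b < k" "b \<noteq> a" using Kk by auto
          then show ?thesis using mem[of a b "X a b"] b A1 a nuX cf_ab by auto
        next
          case A2
          then obtain b where b: "b \<in> K" "x = (b, a, X b a)" unfolding A2_def by auto
          then have "b < k" "b \<noteq> a" using Kk by auto
          then show ?thesis using mem[of b a "X b a"] b A2 a nuX cf_ba by auto
        next
          case B2
          then obtain b where b: "b \<in> K" "x = (a, b, Y a b)" unfolding B2_def by auto
          then have "b < k" "b \<noteq> a" using Kk by auto
          moreover have "Y a b \<noteq> X a b" using XYa[of a b] a \<open>b < k\<close> by auto
          ultimately show ?thesis using mem[of a b "Y a b"] b B2 a nuY cf_ab by auto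
        next
          case B3
          then obtain b where b: "b \<in> K" "x = (b, a, Y b a)" unfolding B3_def by auto
          then have "b < k" "b \<noteq> a" using Kk by auto
          moreover have "Y b a \<noteq> X b a" using XYa[of b a] a \<open>b < k\<close> by auto
          ultimately show ?thesis using mem[of b a "Y b a"] b B3 a nuY cf_ba by auto
        qed (use mem[of a a "Y a a"] a nuY cf_aa in auto)
      qed
    qed
  qed
  have caseT: "(d1 \<noteq> 0 \<and> (\<exists>b\<in>K. x = (a, b, X a b))) \<or> (d1 \<noteq> 0 \<and> (\<exists>b\<in>K. x = (b, a, X b a)))
      \<or> (d2 \<noteq> 0 \<and> (\<exists>b\<in>K. x = (a, b, Y a b))) \<or> (d3 \<noteq> 0 \<and> (\<exists>b\<in>K. x = (b, a, Y b a)))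
      \<or> (ph \<noteq> 0 \<and> x = (a, a, Y a a))" if "x \<in> T" for x
    using that unfolding TC A1_def A2_def B2_def B3_def by (auto split: if_splits)
  have inT: "x \<in> T" if "(d1 \<noteq> 0 \<and> (\<exists>b\<in>K. x = (a, b, X a b))) \<or> (d1 \<noteq> 0 \<and> (\<exists>b\<in>K. x = (b, a, X b a)))
      \<or> (d2 \<noteq> 0 \<and> (\<exists>b\<in>K. x = (a, b, Y a b))) \<or> (d3 \<noteq> 0 \<and> (\<exists>b\<in>K. x = (b, a, Y b a)))
      \<or> (ph \<noteq> 0 \<and> x = (a, a, Y a a))" for x
    using that unfolding TC A1_def A2_def B2_def B3_def by auto
  have vA1: "cfun a b (X a b) = d1" if "b \<in> K" for b
    using that Kk[of b] cv'[of a b "X a b"] a nuX[of a b] cf_ab[of b "X a b"] by auto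
  have vA2: "cfun b a (X b a) = d1" if "b \<in> K" for b
    using that Kk[of b] cv'[of b a "X b a"] a nuX[of b a] cf_ba[of b "X b a"] by auto
  have vB2: "cfun a b (Y a b) = d2" if "b \<in> K" for b
  proof -
    have "b < k" "b \<noteq> a" using that Kk by auto
    moreover have "Y a b \<noteq> X a b" using XYa[of a b] a \<open>b < k\<close> by auto
    ultimately show ?thesis using cv'[of a b "Y a b"] a nuY[of a b] cf_ab[of b "Y a b"] by auto
  qed
  have vB3: "cfun b a (Y b a) = d3" if "b \<in> K" for b
  proof -
    have "b < k" "b \<noteq> a" using that Kk by auto
    moreover have "Y b a \<noteq> X b a" using XYa[of b a] a \<open>b < k\<close> by auto
    ultimately show ?thesis using cv'[of b a "Y b a"] a nuY[of b a] cf_ba[of b "Y b a"] by auto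
  qed
  have vC: "cfun a a (Y a a) = ph" using cv'[of a a "Y a a"] a nuY[of a a] cf_aa by auto
  have YnXV: "Y i j \<notin> XV" if "i < k" "j < k" for i j
  proof
    assume "Y i j \<in> XV"
    then obtain i' j' where "i' < k" "j' < k" "Y i j = X i' j'" unfolding XV_def by blast
    then show False using XY[of i' j' i j] that by simp
  qed
  have XnYO: "X i j \<notin> YO" if "i < k" "j < k" for i j
  proof
    assume "X i j \<in> YO"
    then obtain i' j' where "i' < k" "j' < k" "X i j = Y i' j'" unfolding YO_def by blast
    then show False using XY[of i j i' j'] that by simp
  qed
  have XnYD: "X i j \<notin> YD" if "i < k" "j < k" for i j
  proof
    assume "X i j \<in> YD"
    then obtain i' where "i' < k" "X i j = Y i' i'" unfolding YD_def by blast
    then show False using XY[of i j i' i'] that by simp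
  qed
  have XinXV: "X i j \<in> XV" if "i < k" "j < k" for i j
    unfolding XV_def using that by blast
  have YinYO: "Y i j \<in> YO" if "i < k" "j < k" "i \<noteq> j" for i j
    unfolding YO_def using that by blast
  have YnYO: "Y i i \<notin> YO" if "i < k" for i
  proof
    assume "Y i i \<in> YO"
    then obtain i' j' where "i' < k" "j' < k" "i' \<noteq> j'" "Y i i = Y i' j'" unfolding YO_def by blast
    then show False using Yi[of i i i' j'] that by simp
  qed
  have YinYD: "Y i i \<in> YD" if "i < k" for i
    unfolding YD_def using that by blast
  have YnYD: "Y i j \<notin> YD" if "i < k" "j < k" "i \<noteq> j" for i j
  proof
    assume "Y i j \<in> YD"
    then obtain i' where "i' < k" "Y i j = Y i' i'" unfolding YD_def by blast
    then show False using Yi[of i j i' i'] that by simp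
  qed
  have Kl: "b < k" "b \<noteq> a" "a \<noteq> b" if "b \<in> K" for b using that Kk by auto
  have eT1: "T1 = (if d1 \<noteq> 0 then A1 \<union> A2 else {})"
  proof (rule set_eqI)
    fix x
    show "x \<in> T1 \<longleftrightarrow> x \<in> (if d1 \<noteq> 0 then A1 \<union> A2 else {})"
    proof
      assume H: "x \<in> T1"
      then obtain i j v where x: "x = (i, j, v)" and xT: "x \<in> T" and vX: "v \<in> XV" and cd: "cfun i j v = d1"
        unfolding T1_def by auto
      show "x \<in> (if d1 \<noteq> 0 then A1 \<union> A2 else {})"
        using caseT[OF xT] unfolding A1_def A2_def
      proof (elim disjE conjE bexE)
      qed (use x vX cd YnXV Kl a in auto)
    next
      assume H: "x \<in> (if d1 \<noteq> 0 then A1 \<union> A2 else {})"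
      then show "x \<in> T1" unfolding T1_def A1_def A2_def using inT XinXV vA1 vA2 Kl a
        by (auto split: if_splits)
    qed
  qed
  have eT2: "T2 = (if d2 \<noteq> 0 then B2 else {})"
  proof (rule set_eqI)
    fix x
    show "x \<in> T2 \<longleftrightarrow> x \<in> (if d2 \<noteq> 0 then B2 else {})"
    proof
      assume H: "x \<in> T2"
      then obtain i j v where x: "x = (i, j, v)" and xT: "x \<in> T" and vY: "v \<in> YO" and cd: "cfun i j v = d2"
        unfolding T2_def by auto
      show "x \<in> (if d2 \<noteq> 0 then B2 else {})"
        using caseT[OF xT] unfolding B2_def
      proof (elim disjE conjE bexE)
      qed (use x vY cd XnYO YnYO vB3 d23 Kl a in auto)
    next
      assume H: "x \<in> (if d2 \<noteq> 0 then B2 else {})"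
      then show "x \<in> T2" unfolding T2_def B2_def using inT YinYO vB2 Kl a
        by (auto split: if_splits)
    qed
  qed
  have eT3: "T3 = (if d3 \<noteq> 0 then B3 else {})"
  proof (rule set_eqI)
    fix x
    show "x \<in> T3 \<longleftrightarrow> x \<in> (if d3 \<noteq> 0 then B3 else {})"
    proof
      assume H: "x \<in> T3"
      then obtain i j v where x: "x = (i, j, v)" and xT: "x \<in> T" and vY: "v \<in> YO" and cd: "cfun i j v = d3"
        unfolding T3_def by auto
      show "x \<in> (if d3 \<noteq> 0 then B3 else {})"
        using caseT[OF xT] unfolding B3_def
      proof (elim disjE conjE bexE)
      qed (use x vY cd XnYO YnYO vB2 d23 Kl a in auto)
    next
      assume H: "x \<in> (if d3 \<noteq> 0 then B3 else {})"
      then show "x \<in> T3" unfolding T3_def B3_def using inT YinYO vB3 Kl a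
        by (auto split: if_splits)
    qed
  qed
  have eT4: "T4 = (if ph \<noteq> 0 then {(a, a, Y a a)} else {})"
  proof (rule set_eqI)
    fix x
    show "x \<in> T4 \<longleftrightarrow> x \<in> (if ph \<noteq> 0 then {(a, a, Y a a)} else {})"
    proof
      assume H: "x \<in> T4"
      then obtain i j v where x: "x = (i, j, v)" and xT: "x \<in> T" and vY: "v \<in> YD" and cd: "cfun i j v = ph"
        unfolding T4_def by auto
      show "x \<in> (if ph \<noteq> 0 then {(a, a, Y a a)} else {})"
        using caseT[OF xT]
      proof (elim disjE conjE bexE)
      qed (use x vY cd XnYD YnYD Kl a in auto)
    next
      assume H: "x \<in> (if ph \<noteq> 0 then {(a, a, Y a a)} else {})"
      then show "x \<in> T4" unfolding T4_def using inT YinYD vC a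
        by (auto split: if_splits)
    qed
  qed
  have eT: "T = T1 \<union> T2 \<union> T3 \<union> T4"
    unfolding eT1 eT2 eT3 eT4 using TC by blast
  have dAB: "(A1 \<union> A2) \<inter> B2 = {}" "(A1 \<union> A2) \<inter> B3 = {}" "(A1 \<union> A2) \<inter> {(a, a, Y a a)} = {}"
    "B2 \<inter> B3 = {}" "B2 \<inter> {(a, a, Y a a)} = {}" "B3 \<inter> {(a, a, Y a a)} = {}"
  proof -
    have aK: "a \<notin> K" unfolding K_def by simp
    have YX: "Y i j \<noteq> X i' j'" if "i < k" "j < k" "i' < k" "j' < k" for i j i' j'
      using XY[OF that(3,4,1,2)] by auto
    show "(A1 \<union> A2) \<inter> B2 = {}" "(A1 \<union> A2) \<inter> B3 = {}" "(A1 \<union> A2) \<inter> {(a, a, Y a a)} = {}"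
      "B2 \<inter> B3 = {}" "B2 \<inter> {(a, a, Y a a)} = {}" "B3 \<inter> {(a, a, Y a a)} = {}"
      unfolding A1_def A2_def B2_def B3_def using YX Kl a aK by auto
  qed
  have R: "card T1 = (if d1 \<noteq> 0 then 2 * k - 2 else 0)
     \<and> card T2 = (if d2 \<noteq> 0 then k - 1 else 0)
     \<and> card T3 = (if d3 \<noteq> 0 then k - 1 else 0)
     \<and> card T4 = (if ph \<noteq> 0 then 1 else 0)
     \<and> T = T1 \<union> T2 \<union> T3 \<union> T4
     \<and> T1 \<inter> T2 = {} \<and> T1 \<inter> T3 = {} \<and> T1 \<inter> T4 = {}
     \<and> T2 \<inter> T3 = {} \<and> T2 \<inter> T4 = {} \<and> T3 \<inter> T4 = {}
     \<and> (\<forall>b<k. b \<noteq> a \<longrightarrow>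
          cfun a b (X a b) = d1 \<and> cfun a b (Y a b) = d2
          \<and> (\<forall>v. v \<noteq> u \<and> v \<noteq> X a b \<and> v \<noteq> Y a b \<longrightarrow> cfun a b v = 0)
          \<and> cfun b a (X b a) = d1 \<and> cfun b a (Y b a) = d3
          \<and> (\<forall>v. v \<noteq> u \<and> v \<noteq> X b a \<and> v \<noteq> Y b a \<longrightarrow> cfun b a v = 0))"
  proof (intro conjI)
    show "card T1 = (if d1 \<noteq> 0 then 2 * k - 2 else 0)" using eT1 cA by simp
    show "card T2 = (if d2 \<noteq> 0 then k - 1 else 0)" using eT2 cB2 by simp
    show "card T3 = (if d3 \<noteq> 0 then k - 1 else 0)" using eT3 cB3 by simp
    show "card T4 = (if ph \<noteq> 0 then 1 else 0)" using eT4 by simp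
    show "T = T1 \<union> T2 \<union> T3 \<union> T4" by (rule eT)
    show "T1 \<inter> T2 = {}" "T1 \<inter> T3 = {}" "T1 \<inter> T4 = {}" "T2 \<inter> T3 = {}" "T2 \<inter> T4 = {}" "T3 \<inter> T4 = {}"
      unfolding eT1 eT2 eT3 eT4 using dAB by auto
    show "\<forall>b<k. b \<noteq> a \<longrightarrow>
          cfun a b (X a b) = d1 \<and> cfun a b (Y a b) = d2
          \<and> (\<forall>v. v \<noteq> u \<and> v \<noteq> X a b \<and> v \<noteq> Y a b \<longrightarrow> cfun a b v = 0)
          \<and> cfun b a (X b a) = d1 \<and> cfun b a (Y b a) = d3
          \<and> (\<forall>v. v \<noteq> u \<and> v \<noteq> X b a \<and> v \<noteq> Y b a \<longrightarrow> cfun b a v = 0)"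
    proof (intro allI impI conjI)
      fix b v assume b: "b < k" "b \<noteq> a"
      then have bK: "b \<in> K" using Kk by simp
      show "cfun a b (X a b) = d1" "cfun a b (Y a b) = d2" "cfun b a (X b a) = d1" "cfun b a (Y b a) = d3"
        using vA1 vA2 vB2 vB3 bK by auto
    next
      fix b v assume b: "b < k" "b \<noteq> a" and v: "v \<noteq> u \<and> v \<noteq> X a b \<and> v \<noteq> Y a b"
      then show "cfun a b v = 0" using cv'[of a b v] cf_ab[of b v] a by simp
    next
      fix b v assume b: "b < k" "b \<noteq> a" and v: "v \<noteq> u \<and> v \<noteq> X b a \<and> v \<noteq> Y b a"
      then show "cfun b a v = 0" using cv'[of b a v] cf_ba[of b v] a by simp
    qed
  qed
  then show ?thesis unfolding Let_def T1_def T2_def T3_def T4_def T_def XV_def YO_def YD_def .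
qed


theorem lemma2p12:
  fixes k d t a u :: nat and P :: "nat \<Rightarrow> cpoly" and X Y :: "nat \<Rightarrow> nat \<Rightarrow> nat"
    and p :: ncpoly and d1 d2 d3 :: real
  assumes "k \<ge> 1"
    and "nc_rep k P X Y p"
    and "nc_has_degree p d" and "d > 1"
    and "t \<ge> 2"
    and "p (wX t) = d1" and "p (wX (t - 1) @ [True]) = d2" and "p (True # wX (t - 1)) = d3"
    and "d1 \<noteq> d2" and "d1 \<noteq> d3" and "d2 \<noteq> d3"
    and "a < k" and "u = X a a"
  shows
   "let c = (\<lambda>i j v. ncentry k p X Y i j (replicate_mset (t - 1) u + {#v#}));
        T = {(i, j, v). i < k \<and> j < k \<and> v \<noteq> u \<and> c i j v \<noteq> 0};
        XV = {X i j | i j. i < k \<and> j < k};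
        YO = {Y i j | i j. i < k \<and> j < k \<and> i \<noteq> j};
        YD = {Y i i | i. i < k};
        T1 = {(i, j, v) \<in> T. v \<in> XV \<and> c i j v = d1};
        T2 = {(i, j, v) \<in> T. v \<in> YO \<and> c i j v = d2};
        T3 = {(i, j, v) \<in> T. v \<in> YO \<and> c i j v = d3};
        T4 = {(i, j, v) \<in> T. v \<in> YD \<and> c i j v = phi p (t - 1) 1}
    in card T1 = (if d1 \<noteq> 0 then 2 * k - 2 else 0)
     \<and> card T2 = (if d2 \<noteq> 0 then k - 1 else 0)
     \<and> card T3 = (if d3 \<noteq> 0 then k - 1 else 0)
     \<and> card T4 = (if phi p (t - 1) 1 \<noteq> 0 then 1 else 0)
     \<and> T = T1 \<union> T2 \<union> T3 \<union> T4
     \<and> T1 \<inter> T2 = {} \<and> T1 \<inter> T3 = {} \<and> T1 \<inter> T4 = {}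
     \<and> T2 \<inter> T3 = {} \<and> T2 \<inter> T4 = {} \<and> T3 \<inter> T4 = {}
     \<and> (\<forall>b<k. b \<noteq> a \<longrightarrow>
          c a b (X a b) = d1 \<and> c a b (Y a b) = d2
          \<and> (\<forall>v. v \<noteq> u \<and> v \<noteq> X a b \<and> v \<noteq> Y a b \<longrightarrow> c a b v = 0)
          \<and> c b a (X b a) = d1 \<and> c b a (Y b a) = d3
          \<and> (\<forall>v. v \<noteq> u \<and> v \<noteq> X b a \<and> v \<noteq> Y b a \<longrightarrow> c b a v = 0))"
proof -
  from assms(2) have fin: "finite (nc_support p)"
    and bij: "bij_betw (\<lambda>(c, i, j). if c then Y i j else X i j) (UNIV \<times> {..<k} \<times> {..<k}) {1..2 * k^2}"
    unfolding nc_rep_def by auto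
  from bij have inj: "inj_on (\<lambda>(c, i, j). if c then Y i j else X i j) (UNIV \<times> {..<k} \<times> {..<k})"
    by (rule bij_betw_imp_inj_on)
  have cv: "(\<lambda>i j v. ncentry k p X Y i j (replicate_mset (t - 1) u + {#v#})) i j v =
      (if i = a \<and> j = a then (if v = Y a a then phi p (t - 1) 1 else 0)
       else if i = a then (if v = X a j then d1 else if v = Y a j then d2 else 0)
       else if j = a then (if v = X i a then d1 else if v = Y i a then d3 else 0)
       else 0)" if "i < k" "j < k" "v \<noteq> u" for i j v
  proof -
    have v': "v \<noteq> X a a" using that(3) assms(13) by simp
    have E: "ncentry k p X Y i j (replicate_mset (t - 1) (X a a) + {#v#}) =
      (if i = a \<and> j = a then (if v = Y a a then phi p (t - 1) 1 else 0)
       else if i = a then (if v = X a j then p (wX t) else if v = Y a j then p (wX (t - 1) @ [True]) else 0)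
       else if j = a then (if v = X i a then p (wX t) else if v = Y i a then p (True # wX (t - 1)) else 0)
       else 0)"
      by (rule cval[OF fin inj assms(12) that(1,2) assms(5) v'])
    show ?thesis unfolding assms(13) using E by (simp only: assms(6,7,8))
  qed
  show ?thesis
    by (rule final[where cfun = "\<lambda>i j v. ncentry k p X Y i j (replicate_mset (t - 1) u + {#v#})"
          and ph = "phi p (t - 1) 1", OF inj assms(12,13,9,10,11) cv])
qed

end
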